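(* Let $\Gamma$ be a countable group acting on a countably infinite set $X$ preserving a mean $\mu$, and suppose that for every $\gamma\neq1$ the fixed point set of $\gamma$ in $X$ has $\mu$-measure less than $1$. Then $\Gamma$ admits an action on a countably infinite set $K$ preserving a mean $\nu$ on $K$ such that for every $\gamma\ne1$ the fixed point set of $\gamma$ in $K$ has $\nu$-measure $0$.
   Context: A mean on a set $X$ is a finitely additive $\mu:2^X\to[0,1]$ with $\mu(X)=1$; an action preserves $\mu$ if $\mu(\gamma A)=\mu(A)$ for all $\gamma$ and $A$. *)

theory Defs
  imports Complex_Main "HOL-Library.Countable_Set" "HOL-Algebra.Group_Action"
begin

definition is_mean :: "'x set \<Rightarrow> ('x set \<Rightarrow> real) \<Rightarrow> bool" where
  "is_mean X \<mu> \<longleftrightarrow>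
     (\<forall>A. A \<subseteq> X \<longrightarrow> 0 \<le> \<mu> A \<and> \<mu> A \<le> 1) \<and>
     \<mu> X = 1 \<and>
     (\<forall>A B. A \<subseteq> X \<longrightarrow> B \<subseteq> X \<longrightarrow> A \<inter> B = {} \<longrightarrow> \<mu> (A \<union> B) = \<mu> A + \<mu> B)"

definition preserves_mean ::
  "('g, 'b) monoid_scheme \<Rightarrow> 'x set \<Rightarrow> ('g \<Rightarrow> 'x \<Rightarrow> 'x) \<Rightarrow> ('x set \<Rightarrow> real) \<Rightarrow> bool" where
  "preserves_mean G X \<phi> \<mu> \<longleftrightarrow>
     (\<forall>g \<in> carrier G. \<forall>A. A \<subseteq> X \<longrightarrow> \<mu> (\<phi> g ` A) = \<mu> A)"

definition fixset :: "'x set \<Rightarrow> ('g \<Rightarrow> 'x \<Rightarrow> 'x) \<Rightarrow> 'g \<Rightarrow> 'x set" where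
  "fixset X \<phi> g = {x \<in> X. \<phi> g x = x}"

end

theory Submission
  imports Defs "HOL-Analysis.Analysis"
begin


locale ultraF =
  fixes F :: "'a filter"
  assumes proper: "F \<noteq> bot"
  assumes ultra: "eventually P F \<or> eventually (\<lambda>x. \<not> P x) F"

lemma max_filter_ultraF:
  assumes "F \<noteq> bot"
  assumes max: "\<And>G. G \<noteq> bot \<Longrightarrow> G \<le> F \<Longrightarrow> F = G"
  shows "ultraF F"
proof
  show "eventually P F \<or> (\<forall>\<^sub>Fx in F. \<not> P x)" for P
  proof (rule disjCI)
    assume "\<not> (\<forall>\<^sub>Fx in F. \<not> P x)"
    then have "inf F (principal {x. P x}) \<noteq> bot"
      by (simp add: trivial_limit_def eventually_inf_principal not_eventually)
    then have F: "F = inf F (principal {x. P x})"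
      by (rule max) simp
    show "eventually P F"
      by (subst F) (simp add: eventually_inf_principal)
  qed
qed fact

lemma ex_max_ultraF:
  fixes F :: "'a filter"
  assumes F: "F \<noteq> bot"
  shows "\<exists>U\<le>F. ultraF U"
proof -
  let ?X = "{G. G \<noteq> bot \<and> G \<le> F}"
  let ?R = "{(b, a). a \<noteq> bot \<and> a \<le> b \<and> b \<le> F}"
  have bot_notin_R: "c \<in> Chains ?R \<Longrightarrow> bot \<notin> c" for c
    by (auto simp: Chains_def)
  have [simp]: "Field ?R = ?X"
    by (auto simp: Field_def bot_unique)
  have "\<exists>m\<in>Field ?R. \<forall>a\<in>Field ?R. (m, a) \<in> ?R \<longrightarrow> a = m" (is "\<exists>m\<in>?A. ?B m")
  proof (rule Zorns_po_lemma)
    show "Partial_order ?R"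
      by (auto simp: partial_order_on_def preorder_on_def
          antisym_def refl_on_def trans_def Field_def bot_unique)
    show "\<exists>u\<in>Field ?R. \<forall>a\<in>C. (a, u) \<in> ?R" if C: "C \<in> Chains ?R" for C
    proof (simp, intro exI conjI ballI)
      have Inf_C: "Inf C \<noteq> bot" "Inf C \<le> F" if "C \<noteq> {}"
      proof -
        from C that have "Inf C = bot \<longleftrightarrow> (\<exists>x\<in>C. x = bot)"
          unfolding trivial_limit_def by (intro eventually_Inf_base) (auto simp: Chains_def)
        with C show "Inf C \<noteq> bot"
          by (simp add: bot_notin_R)
        from that obtain x where "x \<in> C" by auto
        with C show "Inf C \<le> F"
          by (auto intro!: Inf_lower2[of x] simp: Chains_def)
      qed
      then have [simp]: "inf F (Inf C) = (if C = {} then F else Inf C)"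
        using C by (auto simp add: inf_absorb2)
      from C show "inf F (Inf C) \<noteq> bot"
        by (simp add: F Inf_C)
      from C show "inf F (Inf C) \<le> F"
        by (simp add: Chains_def Inf_C F)
      with C show "inf F (Inf C) \<le> x" "x \<le> F" if "x \<in> C" for x
        using that  by (auto intro: Inf_lower simp: Chains_def)
    qed
  qed
  then obtain U where U: "U \<in> ?A" "?B U" ..
  show ?thesis
  proof
    from U show "U \<le> F \<and> ultraF U"
      by (auto intro!: max_filter_ultraF)
  qed
qed

lemma ex_free_ultraF: "\<exists>U::nat filter. ultraF U \<and> U \<le> sequentially"
  using ex_max_ultraF[of "sequentially :: nat filter"] by auto

definition ulim :: "nat filter \<Rightarrow> (nat \<Rightarrow> real) \<Rightarrow> real" where
  "ulim U s = (THE L. (s \<longlongrightarrow> L) U)"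

lemma ulim_eq:
  assumes "ultraF U" "(s \<longlongrightarrow> L) U"
  shows "ulim U s = L"
proof -
  have nb: "U \<noteq> bot" using assms(1) ultraF.proper by blast
  show ?thesis unfolding ulim_def
    using assms(2) tendsto_unique[OF nb] by blast
qed

lemma ulim_tendsto:
  assumes U: "ultraF U" and b: "\<And>n. s n \<in> {a..b}"
  shows "(s \<longlongrightarrow> ulim U s) U"
proof -
  have nb: "U \<noteq> bot" using U ultraF.proper by blast
  let ?F = "filtermap s U"
  have "?F \<noteq> bot" using nb by (simp add: filtermap_bot_iff)
  moreover have "eventually (\<lambda>x. x \<in> {a..b}) ?F"
    using b by (simp add: eventually_filtermap)
  ultimately obtain x where x: "inf (nhds x) ?F \<noteq> bot"
    using compact_Icc[of a b] unfolding compact_filter by blast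
  have "(s \<longlongrightarrow> x) U"
  proof (rule topological_tendstoI)
    fix S assume S: "open S" "x \<in> S"
    show "eventually (\<lambda>n. s n \<in> S) U"
    proof (rule ccontr)
      assume "\<not> eventually (\<lambda>n. s n \<in> S) U"
      then have e1: "eventually (\<lambda>n. s n \<notin> S) U" using ultraF.ultra[OF U] by blast
      have e2: "eventually (\<lambda>y. y \<in> S) (nhds x)" using S eventually_nhds by blast
      have "eventually (\<lambda>y. False) (inf (nhds x) ?F)"
        unfolding eventually_inf
        using e1 e2 by (auto simp: eventually_filtermap)
      then show False using x by (simp add: trivial_limit_def)
    qed
  qed
  then show ?thesis using ulim_eq[OF U] by simp
qed

lemma ulim_bounds:
  assumes U: "ultraF U" and b: "\<And>n. s n \<in> {a..b}"
  shows "ulim U s \<in> {a..b}"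
proof -
  have nb: "U \<noteq> bot" using U ultraF.proper by blast
  have t: "(s \<longlongrightarrow> ulim U s) U" by (rule ulim_tendsto[OF U b])
  have "a \<le> ulim U s"
    by (rule tendsto_lowerbound[OF t _ nb]) (use b in auto)
  moreover have "ulim U s \<le> b"
    by (rule tendsto_upperbound[OF t _ nb]) (use b in auto)
  ultimately show ?thesis by simp
qed

lemma ulim_add:
  assumes U: "ultraF U" and "\<And>n. s n \<in> {a..b}" "\<And>n. t n \<in> {c..d}"
  shows "ulim U (\<lambda>n. s n + t n) = ulim U s + ulim U t"
  using ulim_eq[OF U tendsto_add[OF ulim_tendsto[OF U assms(2)] ulim_tendsto[OF U assms(3)]]] .

lemma ulim_seq:
  assumes U: "ultraF U" "U \<le> sequentially" and "s \<longlonglongrightarrow> L"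
  shows "ulim U s = L"
  using ulim_eq[OF U(1) tendsto_mono[OF U(2) assms(3)]] .



lemma mean_empty: "is_mean X \<mu> \<Longrightarrow> \<mu> {} = 0"
  unfolding is_mean_def by (metis Un_empty empty_subsetI inf_bot_left add_cancel_right_right)

lemma mean_add: "is_mean X \<mu> \<Longrightarrow> A \<subseteq> X \<Longrightarrow> B \<subseteq> X \<Longrightarrow> A \<inter> B = {} \<Longrightarrow> \<mu> (A \<union> B) = \<mu> A + \<mu> B"
  unfolding is_mean_def by blast

lemma mean_bnd: "is_mean X \<mu> \<Longrightarrow> A \<subseteq> X \<Longrightarrow> 0 \<le> \<mu> A \<and> \<mu> A \<le> 1"
  unfolding is_mean_def by blast

locale mctx =
  fixes X :: "'x set" and \<mu> :: "'x set \<Rightarrow> real" and U :: "nat filter"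
  assumes mean: "is_mean X \<mu>" and U: "ultraF U" and Useq: "U \<le> sequentially"
begin

definition Tn :: "nat \<Rightarrow> ('x \<Rightarrow> nat) \<Rightarrow> real" where
  "Tn N f = (\<Sum>k=1..N. \<mu> {x\<in>X. k \<le> f x})"

definition integ :: "('x \<Rightarrow> real) \<Rightarrow> real" where
  "integ h = ulim U (\<lambda>m. Tn m (\<lambda>x. nat \<lfloor>real m * h x\<rfloor>) / real m)"

lemma T_cong: "(\<And>x. x \<in> X \<Longrightarrow> f x = f' x) \<Longrightarrow> Tn N f = Tn N f'"
  unfolding Tn_def
  by (intro sum.cong refl arg_cong[where f=\<mu>]) auto

lemma T_bounds: "0 \<le> Tn N f \<and> Tn N f \<le> real N"
proof -
  have *: "\<And>k. 0 \<le> \<mu> {x\<in>X. k \<le> f x} \<and> \<mu> {x\<in>X. k \<le> f x} \<le> 1"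
    by (rule mean_bnd[OF mean]) auto
  then have "0 \<le> Tn N f" unfolding Tn_def by (simp add: sum_nonneg)
  moreover have "Tn N f \<le> (\<Sum>k\<in>{1..N}. (1::real))"
    unfolding Tn_def by (rule sum_mono) (use * in blast)
  ultimately show ?thesis by simp
qed

lemma T_stable: assumes "\<And>x. x \<in> X \<Longrightarrow> f x \<le> N" shows "Tn (N + M) f = Tn N f"
proof (induction M)
  case 0 then show ?case by simp
next
  case (Suc M)
  have "{x\<in>X. Suc (N + M) \<le> f x} = {}" using assms by force
  then have "\<mu> {x\<in>X. Suc (N + M) \<le> f x} = 0" by (simp only: mean_empty[OF mean])
  then have "Tn (N + Suc M) f = Tn (N + M) f"
    unfolding Tn_def by simp
  then show ?case using Suc by simp
qed

lemma T_stable': assumes "\<And>x. x \<in> X \<Longrightarrow> f x \<le> N" "N \<le> N'" shows "Tn N' f = Tn N f"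
  using T_stable[OF assms(1), where M="N' - N"] assms(2) by simp

lemma part_sum: fixes f :: "'x \<Rightarrow> nat" shows "(\<Sum>j=0..N. \<mu> {x\<in>X. x \<in> B \<and> f x = j}) = \<mu> {x\<in>X. x \<in> B \<and> f x \<le> N}"
proof (induction N)
  case 0 then show ?case by simp
next
  case (Suc N)
  have "{x\<in>X. x \<in> B \<and> f x \<le> Suc N} = {x\<in>X. x \<in> B \<and> f x \<le> N} \<union> {x\<in>X. x \<in> B \<and> f x = Suc N}"
    by auto
  then have "\<mu> {x\<in>X. x \<in> B \<and> f x \<le> Suc N} = \<mu> {x\<in>X. x \<in> B \<and> f x \<le> N} + \<mu> {x\<in>X. x \<in> B \<and> f x = Suc N}"
    by (simp only:, intro mean_add[OF mean]) auto
  then show ?case using Suc by simp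
qed

lemma T_ind:
  assumes "\<And>x. x \<in> X \<Longrightarrow> f x \<le> N"
  shows "Tn (Suc N) (\<lambda>x. f x + (if x \<in> B then 1 else 0)) = Tn N f + \<mu> (B \<inter> X)"
proof -
  have t: "\<mu> {x\<in>X. k \<le> f x + (if x \<in> B then 1 else 0)} = \<mu> {x\<in>X. k \<le> f x} + \<mu> {x\<in>X. x \<in> B \<and> f x = k - 1}"
    if "k \<ge> 1" for k
  proof -
    have "{x\<in>X. k \<le> f x + (if x \<in> B then 1 else 0)} = {x\<in>X. k \<le> f x} \<union> {x\<in>X. x \<in> B \<and> f x = k - 1}"
      using that by auto
    then show ?thesis by (simp only:, intro mean_add[OF mean]) (use that in auto)
  qed
  have "Tn (Suc N) (\<lambda>x. f x + (if x \<in> B then 1 else 0)) =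
     (\<Sum>k=1..Suc N. \<mu> {x\<in>X. k \<le> f x}) + (\<Sum>k=1..Suc N. \<mu> {x\<in>X. x \<in> B \<and> f x = k - 1})"
    unfolding Tn_def by (simp add: t sum.distrib)
  also have "(\<Sum>k=1..Suc N. \<mu> {x\<in>X. k \<le> f x}) = Tn N f"
    using T_stable'[OF assms, where N'="Suc N"] by (simp add: Tn_def)
  also have "(\<Sum>k=1..Suc N. \<mu> {x\<in>X. x \<in> B \<and> f x = k - 1}) = (\<Sum>j=0..N. \<mu> {x\<in>X. x \<in> B \<and> f x = j})"
    unfolding One_nat_def sum.shift_bounds_cl_Suc_ivl by simp
  also have "\<dots> = \<mu> (B \<inter> X)"
    unfolding part_sum using assms by (intro arg_cong[where f=\<mu>]) auto
  finally show ?thesis .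
qed

lemma T_add:
  assumes "\<And>x. x \<in> X \<Longrightarrow> f x \<le> N" "\<And>x. x \<in> X \<Longrightarrow> g x \<le> M"
  shows "Tn (N + M) (\<lambda>x. f x + g x) = Tn N f + Tn M g"
  using assms(2)
proof (induction M arbitrary: g)
  case 0
  have "Tn N (\<lambda>x. f x + g x) = Tn N f" using 0 by (intro T_cong) auto
  then show ?case by (simp add: Tn_def)
next
  case (Suc M)
  define g' where "g' = (\<lambda>x. min (g x) M)"
  define B where "B = {x. g x = Suc M}"
  have g: "g x = g' x + (if x \<in> B then 1 else 0)" if "x \<in> X" for x
    using Suc.prems[OF that] by (auto simp: g'_def B_def)
  have g'b: "\<And>x. x \<in> X \<Longrightarrow> g' x \<le> M" by (simp add: g'_def)
  have "Tn (N + Suc M) (\<lambda>x. f x + g x) = Tn (Suc (N + M)) (\<lambda>x. (f x + g' x) + (if x \<in> B then 1 else 0))"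
    unfolding add_Suc_right using g by (intro T_cong) (simp add: add.assoc)
  also have "\<dots> = Tn (N + M) (\<lambda>x. f x + g' x) + \<mu> (B \<inter> X)"
    by (rule T_ind) (use assms(1) g'b in force)
  also have "\<dots> = Tn N f + Tn M g' + \<mu> (B \<inter> X)" using Suc.IH[OF g'b] by simp
  also have "Tn M g' + \<mu> (B \<inter> X) = Tn (Suc M) g"
    using T_ind[of g' M B, OF g'b] g by (simp cong: T_cong)
  then have "Tn N f + Tn M g' + \<mu> (B \<inter> X) = Tn N f + Tn (Suc M) g" by simp
  finally show ?case .
qed

lemma T_ind_const:
  assumes "c \<le> N"
  shows "Tn N (\<lambda>x. if x \<in> F then c else 0) = real c * \<mu> (F \<inter> X)"
proof -
  have "Tn N (\<lambda>x. if x \<in> F then c else 0) = Tn c (\<lambda>x. if x \<in> F then c else 0)"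
    by (rule T_stable') (use assms in auto)
  also have "\<dots> = (\<Sum>k=1..c. \<mu> (F \<inter> X))"
    unfolding Tn_def by (intro sum.cong refl arg_cong[where f=\<mu>]) auto
  finally show ?thesis by simp
qed

lemma T_inv:
  assumes pres: "\<And>S. S \<subseteq> X \<Longrightarrow> \<mu> (\<tau> ` S) = \<mu> S"
    and s: "\<And>x. x \<in> X \<Longrightarrow> \<sigma> x \<in> X \<and> \<tau> (\<sigma> x) = x"
    and t: "\<And>y. y \<in> X \<Longrightarrow> \<tau> y \<in> X \<and> \<sigma> (\<tau> y) = y"
  shows "Tn N (\<lambda>x. f (\<sigma> x)) = Tn N f"
  unfolding Tn_def
proof (intro sum.cong refl)
  fix k
  have "{x\<in>X. k \<le> f (\<sigma> x)} = \<tau> ` {y\<in>X. k \<le> f y}"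
    using s t by (auto simp: image_iff) (metis)
  then show "\<mu> {x\<in>X. k \<le> f (\<sigma> x)} = \<mu> {x\<in>X. k \<le> f x}"
    using pres[of "{y\<in>X. k \<le> f y}"] by auto
qed

end


lemma floor_conv: fixes c :: real assumes "0 \<le> c"
  shows "(\<lambda>m. real (nat \<lfloor>real m * c\<rfloor>) / real m) \<longlonglongrightarrow> c"
proof (rule tendsto_sandwich[where f="\<lambda>m. c - 1 / real m" and h="\<lambda>m. c"])
  show "\<forall>\<^sub>F n in sequentially. c - 1 / real n \<le> real (nat \<lfloor>real n * c\<rfloor>) / real n"
    using eventually_ge_at_top[of "1::nat"]
  proof eventually_elim
    case (elim n)
    have "real n * c - 1 \<le> real (nat \<lfloor>real n * c\<rfloor>)"
    proof -
      have "\<lfloor>real n * c\<rfloor> \<ge> 0" using assms by simp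
      then have "real (nat \<lfloor>real n * c\<rfloor>) = of_int \<lfloor>real n * c\<rfloor>" by simp
      with floor_eq_iff[of "real n * c" "\<lfloor>real n * c\<rfloor>"] show ?thesis by linarith
    qed
    moreover have "c - 1 / real n = (real n * c - 1) / real n" using elim by (simp add: field_simps)
    ultimately show ?case by (simp add: divide_right_mono)
  qed
  show "\<forall>\<^sub>F n in sequentially. real (nat \<lfloor>real n * c\<rfloor>) / real n \<le> c"
    using eventually_ge_at_top[of "1::nat"]
  proof eventually_elim
    case (elim n)
    have "real (nat \<lfloor>real n * c\<rfloor>) \<le> real n * c"
      using assms by simp
    then show ?case using elim by (simp add: field_simps)
  qed
  show "(\<lambda>m. c - 1 / real m) \<longlonglongrightarrow> c"
    using tendsto_diff[OF tendsto_const[of c] lim_1_over_n] by simp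
qed simp

lemma nat_floor_add: fixes a b :: real assumes "0 \<le> a" "0 \<le> b"
  shows "nat \<lfloor>a + b\<rfloor> = nat \<lfloor>a\<rfloor> + nat \<lfloor>b\<rfloor> \<or> nat \<lfloor>a + b\<rfloor> = nat \<lfloor>a\<rfloor> + nat \<lfloor>b\<rfloor> + 1"
proof -
  have "\<lfloor>a\<rfloor> \<ge> 0" "\<lfloor>b\<rfloor> \<ge> 0" using assms by auto
  then show ?thesis using floor_add[of a b] by (auto split: if_splits simp: nat_add_distrib)
qed

context mctx begin

lemma S_bnd: "Tn m f / real m \<in> {0..1}"
  using T_bounds[of m f] by (cases "m = 0") (auto simp: Tn_def field_simps)

lemma integ_bnd: "integ h \<in> {0..1}"
  unfolding integ_def by (rule ulim_bounds[OF U S_bnd])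

lemma integ_cong: "(\<And>x. x \<in> X \<Longrightarrow> h x = h' x) \<Longrightarrow> integ h = integ h'"
  unfolding integ_def by (intro arg_cong[where f="ulim U"] ext arg_cong2[where f="(/)"] T_cong refl) simp

lemma integ_add:
  assumes h: "\<And>x. x \<in> X \<Longrightarrow> 0 \<le> h1 x \<and> 0 \<le> h2 x \<and> h1 x + h2 x \<le> 1"
  shows "integ (\<lambda>x. h1 x + h2 x) = integ h1 + integ h2"
proof -
  define S1 where "S1 m = Tn m (\<lambda>x. nat \<lfloor>real m * h1 x\<rfloor>) / real m" for m
  define S2 where "S2 m = Tn m (\<lambda>x. nat \<lfloor>real m * h2 x\<rfloor>) / real m" for m
  define B where "B m = {x. nat \<lfloor>real m * h1 x + real m * h2 x\<rfloor> \<noteq> nat \<lfloor>real m * h1 x\<rfloor> + nat \<lfloor>real m * h2 x\<rfloor>}" for m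
  define r where "r m = \<mu> (B m \<inter> X) / real m" for m
  have key: "Tn m (\<lambda>x. nat \<lfloor>real m * (h1 x + h2 x)\<rfloor>) / real m = (S1 m + S2 m) + r m" for m
  proof -
    let ?f1 = "\<lambda>x. nat \<lfloor>real m * h1 x\<rfloor>" and ?f2 = "\<lambda>x. nat \<lfloor>real m * h2 x\<rfloor>"
      and ?f = "\<lambda>x. nat \<lfloor>real m * (h1 x + h2 x)\<rfloor>"
    have b1: "?f1 x \<le> m" if "x \<in> X" for x
    proof -
      have "real m * h1 x \<le> real m * 1" using h[OF that] by (intro mult_left_mono) auto
      then show ?thesis by (simp add: nat_le_iff floor_le_iff)
    qed
    have b2: "?f2 x \<le> m" if "x \<in> X" for x
    proof -
      have "real m * h2 x \<le> real m * 1" using h[OF that] by (intro mult_left_mono) auto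
      then show ?thesis by (simp add: nat_le_iff floor_le_iff)
    qed
    have b: "?f x \<le> m" if "x \<in> X" for x
    proof -
      have "real m * (h1 x + h2 x) \<le> real m * 1" using h[OF that] by (intro mult_left_mono) auto
      then show ?thesis by (simp add: nat_le_iff floor_le_iff)
    qed
    have fe: "?f x = (?f1 x + ?f2 x) + (if x \<in> B m then 1 else 0)" if "x \<in> X" for x
      using nat_floor_add[of "real m * h1 x" "real m * h2 x"] h[OF that]
      by (auto simp: B_def distrib_left)
    have "Tn m ?f = Tn (Suc (m + m)) ?f" by (rule T_stable'[symmetric]) (use b in auto)
    also have "\<dots> = Tn (Suc (m + m)) (\<lambda>x. (?f1 x + ?f2 x) + (if x \<in> B m then 1 else 0))"
      by (rule T_cong) (rule fe)
    also have "\<dots> = Tn (m + m) (\<lambda>x. ?f1 x + ?f2 x) + \<mu> (B m \<inter> X)"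
      by (rule T_ind) (use b1 b2 in force)
    also have "\<dots> = Tn m ?f1 + Tn m ?f2 + \<mu> (B m \<inter> X)"
      using T_add[of ?f1 m ?f2 m] b1 b2 by simp
    finally show ?thesis by (simp add: S1_def S2_def r_def add_divide_distrib)
  qed
  have Sb: "S1 m + S2 m \<in> {0..2}" for m
  proof -
    have "S1 m \<in> {0..1}" "S2 m \<in> {0..1}" unfolding S1_def S2_def by (rule S_bnd)+
    then show ?thesis by simp
  qed
  have mb: "0 \<le> \<mu> (B m \<inter> X) \<and> \<mu> (B m \<inter> X) \<le> 1" for m by (rule mean_bnd[OF mean]) auto
  have rb: "0 \<le> r m \<and> r m \<le> 1 / real m" for m
    unfolding r_def using mb[of m] by (simp add: divide_right_mono)
  have rb': "r m \<in> {0..1}" for m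
  proof (cases "m = 0")
    case True then show ?thesis by (simp add: r_def)
  next
    case False
    then have "real m \<ge> 1" by simp
    then have "\<mu> (B m \<inter> X) \<le> real m" using mb[of m] by linarith
    then show ?thesis using False mb[of m] by (simp add: r_def divide_le_eq)
  qed
  have r0: "r \<longlonglongrightarrow> 0"
  proof (rule tendsto_sandwich[where f="\<lambda>_. 0" and h="\<lambda>m. 1 / real m"])
    show "\<forall>\<^sub>F n in sequentially. 0 \<le> r n" using rb by (simp add: always_eventually)
    show "\<forall>\<^sub>F n in sequentially. r n \<le> 1 / real n" using rb by (simp add: always_eventually)
  qed (simp_all add: lim_1_over_n)
  have "integ (\<lambda>x. h1 x + h2 x) = ulim U (\<lambda>m. (S1 m + S2 m) + r m)"
    unfolding integ_def key ..
  also have "\<dots> = ulim U (\<lambda>m. S1 m + S2 m) + ulim U r"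
    by (rule ulim_add[OF U Sb rb'])
  also have "ulim U r = 0" by (rule ulim_seq[OF U Useq r0])
  also have "ulim U (\<lambda>m. S1 m + S2 m) = ulim U S1 + ulim U S2"
    unfolding S1_def S2_def by (rule ulim_add[OF U S_bnd S_bnd])
  finally show ?thesis unfolding integ_def S1_def S2_def by simp
qed

lemma integ_ind:
  assumes "0 \<le> c" "c \<le> 1"
  shows "integ (\<lambda>x. if x \<in> F then c else 0) = c * \<mu> (F \<inter> X)"
proof -
  have e: "(\<lambda>x. nat \<lfloor>real m * (if x \<in> F then c else 0)\<rfloor>) = (\<lambda>x. if x \<in> F then nat \<lfloor>real m * c\<rfloor> else 0)" for m
    by auto
  have le: "nat \<lfloor>real m * c\<rfloor> \<le> m" for m
  proof -
    have "real m * c \<le> real m * 1" using assms by (intro mult_left_mono) auto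
    then show ?thesis by (simp add: nat_le_iff floor_le_iff)
  qed
  have "integ (\<lambda>x. if x \<in> F then c else 0) = ulim U (\<lambda>m. real (nat \<lfloor>real m * c\<rfloor>) / real m * \<mu> (F \<inter> X))"
    unfolding integ_def e T_ind_const[OF le] by simp
  also have "\<dots> = c * \<mu> (F \<inter> X)"
    by (rule ulim_seq[OF U Useq tendsto_mult[OF floor_conv[OF assms(1)] tendsto_const]])
  finally show ?thesis .
qed

lemma integ_inv:
  assumes pres: "\<And>S. S \<subseteq> X \<Longrightarrow> \<mu> (\<tau> ` S) = \<mu> S"
    and s: "\<And>x. x \<in> X \<Longrightarrow> \<sigma> x \<in> X \<and> \<tau> (\<sigma> x) = x"
    and t: "\<And>y. y \<in> X \<Longrightarrow> \<tau> y \<in> X \<and> \<sigma> (\<tau> y) = y"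
  shows "integ (\<lambda>x. h (\<sigma> x)) = integ h"
proof -
  have "Tn m (\<lambda>x. nat \<lfloor>real m * h (\<sigma> x)\<rfloor>) = Tn m (\<lambda>x. nat \<lfloor>real m * h x\<rfloor>)" for m
    by (rule T_inv[OF pres s t, where f="\<lambda>x. nat \<lfloor>real m * h x\<rfloor>"])
  then show ?thesis unfolding integ_def by simp
qed

end


primrec mpow :: "(('x \<Rightarrow> real) \<Rightarrow> real) \<Rightarrow> nat \<Rightarrow> 'x list set \<Rightarrow> real" where
  "mpow I 0 A = (if [] \<in> A then 1 else 0)"
| "mpow I (Suc n) A = I (\<lambda>x. mpow I n {xs. x # xs \<in> A})"

definition Ln :: "'x set \<Rightarrow> nat \<Rightarrow> 'x list set" where
  "Ln S n = {xs. set xs \<subseteq> S \<and> length xs = n}"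

lemma Ln_0: "Ln S 0 = {[]}" by (auto simp: Ln_def)

lemma sec_Ln: "x \<in> S \<Longrightarrow> {xs. x # xs \<in> Ln S (Suc n)} = Ln S n"
  by (auto simp: Ln_def)

lemma sec_sub: "A \<subseteq> Ln S (Suc n) \<Longrightarrow> {xs. x # xs \<in> A} \<subseteq> Ln S n"
  unfolding Ln_def by fastforce

lemma map_fix_iff: "map \<sigma> xs = xs \<longleftrightarrow> (\<forall>x\<in>set xs. \<sigma> x = x)"
  by (induction xs) auto

context mctx begin

abbreviation "mp \<equiv> mpow integ"

lemma integ_one: "integ (\<lambda>x. if x \<in> X then 1 else 0) = 1"
  using integ_ind[of 1 X] mean by (simp add: is_mean_def)

lemma mpow_mean: "is_mean (Ln X n) (mp n)"
proof (induction n)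
  case 0
  show ?case unfolding is_mean_def Ln_0
  proof (intro conjI allI impI)
    fix A B :: "'x list set" assume "A \<subseteq> {[]}" "B \<subseteq> {[]}" "A \<inter> B = {}"
    then show "mp 0 (A \<union> B) = mp 0 A + mp 0 B" by auto
  qed auto
next
  case (Suc n)
  let ?h = "\<lambda>A x. mp n {xs. x # xs \<in> A}"
  show ?case unfolding is_mean_def
  proof (intro conjI allI impI)
    fix A assume "A \<subseteq> Ln X (Suc n)"
    show "0 \<le> mp (Suc n) A" "mp (Suc n) A \<le> 1" using integ_bnd by auto
  next
    have "mp (Suc n) (Ln X (Suc n)) = integ (\<lambda>x. if x \<in> X then 1 else 0)"
      unfolding mpow.simps
    proof (rule integ_cong)
      fix x assume x: "x \<in> X"
      show "mp n {xs. x # xs \<in> Ln X (Suc n)} = (if x \<in> X then 1 else 0)"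
        using Suc x unfolding sec_Ln[OF x] is_mean_def by simp
    qed
    then show "mp (Suc n) (Ln X (Suc n)) = 1" using integ_one by simp
  next
    fix A B assume AB: "A \<subseteq> Ln X (Suc n)" "B \<subseteq> Ln X (Suc n)" "A \<inter> B = {}"
    have sA: "{xs. x # xs \<in> A} \<subseteq> Ln X n" and sB: "{xs. x # xs \<in> B} \<subseteq> Ln X n" for x
      by (rule sec_sub[OF AB(1)], rule sec_sub[OF AB(2)])
    have eq: "?h (A \<union> B) x = ?h A x + ?h B x" for x
    proof -
      have e: "{xs. x # xs \<in> A \<union> B} = {xs. x # xs \<in> A} \<union> {xs. x # xs \<in> B}" by auto
      have d: "{xs. x # xs \<in> A} \<inter> {xs. x # xs \<in> B} = {}" using AB(3) by auto
      show ?thesis unfolding e by (rule mean_add[OF Suc sA sB d])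
    qed
    have bnds: "0 \<le> ?h A x \<and> 0 \<le> ?h B x \<and> ?h A x + ?h B x \<le> 1" for x
    proof -
      have "{xs. x # xs \<in> A \<union> B} \<subseteq> Ln X n" using sA[of x] sB[of x] by auto
      then have "?h (A \<union> B) x \<le> 1" using mean_bnd[OF Suc] by blast
      moreover have "0 \<le> ?h A x" using mean_bnd[OF Suc sA] by blast
      moreover have "0 \<le> ?h B x" using mean_bnd[OF Suc sB] by blast
      ultimately show ?thesis using eq[of x] by simp
    qed
    show "mp (Suc n) (A \<union> B) = mp (Suc n) A + mp (Suc n) B"
      unfolding mpow.simps eq by (rule integ_add) (use bnds in blast)
  qed
qed

lemma mpow_empty: "mp n {} = 0"
  using mean_empty[OF mpow_mean] .

lemma mpow_inv:
  assumes pres1: "\<And>S. S \<subseteq> X \<Longrightarrow> \<mu> (\<sigma> ` S) = \<mu> S"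
    and pres2: "\<And>S. S \<subseteq> X \<Longrightarrow> \<mu> (\<tau> ` S) = \<mu> S"
    and s: "\<And>x. x \<in> X \<Longrightarrow> \<sigma> x \<in> X \<and> \<tau> (\<sigma> x) = x"
    and t: "\<And>y. y \<in> X \<Longrightarrow> \<tau> y \<in> X \<and> \<sigma> (\<tau> y) = y"
  shows "A \<subseteq> Ln X n \<Longrightarrow> mp n (map \<sigma> ` A) = mp n A"
proof (induction n arbitrary: A)
  case 0
  then have "A \<subseteq> {[]}" by (simp add: Ln_0)
  then have "A = {} \<or> A = {[]}" by blast
  then have "map \<sigma> ` A = A" by auto
  then show ?case by simp
next
  case (Suc n)
  have sec: "{xs. x # xs \<in> map \<sigma> ` A} = map \<sigma> ` {ys. \<tau> x # ys \<in> A}" if "x \<in> X" for x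
  proof
    show "{xs. x # xs \<in> map \<sigma> ` A} \<subseteq> map \<sigma> ` {ys. \<tau> x # ys \<in> A}"
    proof
      fix xs assume "xs \<in> {xs. x # xs \<in> map \<sigma> ` A}"
      then obtain zs where zs: "zs \<in> A" "x # xs = map \<sigma> zs" by auto
      then obtain y ys where "zs = y # ys" by (cases zs) auto
      with zs have "x = \<sigma> y" "xs = map \<sigma> ys" "y # ys \<in> A" by auto
      moreover have "y \<in> X" using Suc.prems \<open>y # ys \<in> A\<close> by (auto simp: Ln_def)
      ultimately show "xs \<in> map \<sigma> ` {ys. \<tau> x # ys \<in> A}" using s by auto
    qed
  next
    show "map \<sigma> ` {ys. \<tau> x # ys \<in> A} \<subseteq> {xs. x # xs \<in> map \<sigma> ` A}"
    proof
      fix xs assume "xs \<in> map \<sigma> ` {ys. \<tau> x # ys \<in> A}"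
      then obtain ys where ys: "\<tau> x # ys \<in> A" "xs = map \<sigma> ys" by auto
      then have "map \<sigma> (\<tau> x # ys) = x # xs" using t[OF that] by simp
      then show "xs \<in> {xs. x # xs \<in> map \<sigma> ` A}" using ys by (metis (mono_tags, lifting) image_eqI mem_Collect_eq)
    qed
  qed
  have "mp (Suc n) (map \<sigma> ` A) = integ (\<lambda>x. mp n {ys. \<tau> x # ys \<in> A})"
    unfolding mpow.simps
  proof (rule integ_cong)
    fix x assume x: "x \<in> X"
    have "{ys. \<tau> x # ys \<in> A} \<subseteq> Ln X n" using sec_sub[OF Suc.prems] by blast
    then show "mp n {xs. x # xs \<in> map \<sigma> ` A} = mp n {ys. \<tau> x # ys \<in> A}"
      using sec[OF x] Suc.IH by simp
  qed
  also have "\<dots> = mp (Suc n) A"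
    unfolding mpow.simps by (rule integ_inv[OF pres1 t s])
  finally show ?case .
qed

lemma mpow_fix:
  assumes F: "F \<subseteq> X"
  shows "mp n (Ln F n) = \<mu> F ^ n"
proof (induction n)
  case 0 then show ?case by (simp add: Ln_0)
next
  case (Suc n)
  have muF: "0 \<le> \<mu> F" "\<mu> F \<le> 1" using mean_bnd[OF mean F] by auto
  have "mp (Suc n) (Ln F (Suc n)) = integ (\<lambda>x. if x \<in> F then \<mu> F ^ n else 0)"
    unfolding mpow.simps
  proof (rule integ_cong)
    fix x assume "x \<in> X"
    show "mp n {xs. x # xs \<in> Ln F (Suc n)} = (if x \<in> F then \<mu> F ^ n else 0)"
    proof (cases "x \<in> F")
      case True then show ?thesis using sec_Ln[OF True] Suc by simp
    next
      case False
      then have "{xs. x # xs \<in> Ln F (Suc n)} = {}" by (auto simp: Ln_def)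
      then show ?thesis using False mpow_empty by simp
    qed
  qed
  also have "\<dots> = \<mu> F ^ n * \<mu> (F \<inter> X)"
    by (rule integ_ind) (use muF in \<open>auto intro: power_le_one\<close>)
  also have "F \<inter> X = F" using F by auto
  finally show ?case by simp
qed

definition nu :: "'x list set \<Rightarrow> real" where
  "nu A = ulim U (\<lambda>n. mp n (A \<inter> Ln X n))"

lemma mp_bnd: "mp n (A \<inter> Ln X n) \<in> {0..1}"
  using mpow_mean[of n] unfolding is_mean_def by auto

lemma nu_mean: "is_mean (lists X) nu"
  unfolding is_mean_def
proof (intro conjI allI impI)
  fix A :: "'x list set"
  show "0 \<le> nu A" "nu A \<le> 1" using ulim_bounds[OF U mp_bnd] unfolding nu_def by auto
next
  have "lists X \<inter> Ln X n = Ln X n" for n by (auto simp: Ln_def)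
  then have "nu (lists X) = ulim U (\<lambda>n. 1)"
    unfolding nu_def using mpow_mean unfolding is_mean_def by simp
  also have "\<dots> = 1" by (rule ulim_eq[OF U tendsto_const])
  finally show "nu (lists X) = 1" .
next
  fix A B :: "'x list set" assume AB: "A \<inter> B = {}"
  have "mp n ((A \<union> B) \<inter> Ln X n) = mp n (A \<inter> Ln X n) + mp n (B \<inter> Ln X n)" for n
  proof -
    have "(A \<union> B) \<inter> Ln X n = (A \<inter> Ln X n) \<union> (B \<inter> Ln X n)" by auto
    then show ?thesis using mean_add[OF mpow_mean[of n], of "A \<inter> Ln X n" "B \<inter> Ln X n"] AB by auto
  qed
  then show "nu (A \<union> B) = nu A + nu B"
    unfolding nu_def by (simp add: ulim_add[OF U mp_bnd mp_bnd])
qed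

lemma nu_inv:
  assumes pres1: "\<And>S. S \<subseteq> X \<Longrightarrow> \<mu> (\<sigma> ` S) = \<mu> S"
    and pres2: "\<And>S. S \<subseteq> X \<Longrightarrow> \<mu> (\<tau> ` S) = \<mu> S"
    and s: "\<And>x. x \<in> X \<Longrightarrow> \<sigma> x \<in> X \<and> \<tau> (\<sigma> x) = x"
    and t: "\<And>y. y \<in> X \<Longrightarrow> \<tau> y \<in> X \<and> \<sigma> (\<tau> y) = y"
    and A: "A \<subseteq> lists X"
  shows "nu (map \<sigma> ` A) = nu A"
proof -
  have e: "map \<sigma> ` A \<inter> Ln X n = map \<sigma> ` (A \<inter> Ln X n)" for n
  proof
    show "map \<sigma> ` A \<inter> Ln X n \<subseteq> map \<sigma> ` (A \<inter> Ln X n)"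
    proof
      fix y assume "y \<in> map \<sigma> ` A \<inter> Ln X n"
      then obtain z where z: "z \<in> A" "y = map \<sigma> z" "length y = n" by (auto simp: Ln_def)
      then have "set z \<subseteq> X" using A by auto
      then have "z \<in> Ln X n" using z by (simp add: Ln_def)
      then show "y \<in> map \<sigma> ` (A \<inter> Ln X n)" using z by blast
    qed
    show "map \<sigma> ` (A \<inter> Ln X n) \<subseteq> map \<sigma> ` A \<inter> Ln X n"
      using s by (force simp: Ln_def)
  qed
  have "mp n (map \<sigma> ` (A \<inter> Ln X n)) = mp n (A \<inter> Ln X n)" for n
    by (rule mpow_inv[OF pres1 pres2 s t]) auto
  then show ?thesis unfolding nu_def e by simp
qed

lemma nu_fix:
  assumes s: "\<And>x. x \<in> X \<Longrightarrow> \<sigma> x \<in> X" and lt: "\<mu> {x \<in> X. \<sigma> x = x} < 1"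
  shows "nu {xs \<in> lists X. map \<sigma> xs = xs} = 0"
proof -
  let ?F = "{x \<in> X. \<sigma> x = x}"
  have "{xs \<in> lists X. map \<sigma> xs = xs} \<inter> Ln X n = Ln ?F n" for n
    by (auto simp: Ln_def map_fix_iff)
  then have "nu {xs \<in> lists X. map \<sigma> xs = xs} = ulim U (\<lambda>n. \<mu> ?F ^ n)"
    unfolding nu_def by (simp add: mpow_fix)
  also have "\<dots> = 0"
  proof (rule ulim_seq[OF U Useq], rule LIMSEQ_power_zero)
    have "0 \<le> \<mu> ?F" using mean_bnd[OF mean, of ?F] by auto
    then show "norm (\<mu> ?F) < 1" using lt by simp
  qed
  finally show ?thesis .
qed

end


theorem lemma5p2:
  fixes G :: "('g, 'b) monoid_scheme" and X :: "'x set" and \<phi> :: "'g \<Rightarrow> 'x \<Rightarrow> 'x"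
    and \<mu> :: "'x set \<Rightarrow> real"
  assumes "countable (carrier G)"
    and "countable X" and "infinite X"
    and "group_action G X \<phi>"
    and "is_mean X \<mu>"
    and "preserves_mean G X \<phi> \<mu>"
    and "\<And>g. g \<in> carrier G \<Longrightarrow> g \<noteq> \<one>\<^bsub>G\<^esub> \<Longrightarrow> \<mu> (fixset X \<phi> g) < 1"
  shows "\<exists>(K :: nat set) (\<psi> :: 'g \<Rightarrow> nat \<Rightarrow> nat) (\<nu> :: nat set \<Rightarrow> real).
           countable K \<and> infinite K \<and>
           group_action G K \<psi> \<and> is_mean K \<nu> \<and> preserves_mean G K \<psi> \<nu> \<and>
           (\<forall>g \<in> carrier G. g \<noteq> \<one>\<^bsub>G\<^esub> \<longrightarrow> \<nu> (fixset K \<psi> g) = 0)"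
proof -
  obtain U :: "nat filter" where U: "ultraF U" "U \<le> sequentially" using ex_free_ultraF by blast
  interpret M: mctx X \<mu> U using assms(5) U by (simp add: mctx_def)
  interpret GA: group_action G X \<phi> by (rule assms(4))
  interpret grp: group G using GA.group_hom group_hom.axioms(1) by blast
  let ?L = "lists X"
  have cL: "countable ?L" using assms(2) by simp
  have iL: "infinite ?L"
  proof
    assume "finite ?L"
    moreover have "(\<lambda>x. [x]) ` X \<subseteq> ?L" by auto
    ultimately have "finite ((\<lambda>x. [x]) ` X)" by (rule finite_subset[rotated])
    then have "finite X" by (rule finite_imageD) (simp add: inj_on_def)
    then show False using assms(3) by simp
  qed
  define e where "e = to_nat_on ?L"
  define d where "d = from_nat_into ?L"
  have bd: "bij_betw d UNIV ?L" unfolding d_def by (rule bij_betw_from_nat_into[OF cL iL])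
  have dL: "d n \<in> ?L" for n using bd by (auto simp: bij_betw_def)
  have ed: "e (d n) = n" for n unfolding e_def d_def using cL iL by simp
  have de: "y \<in> ?L \<Longrightarrow> d (e y) = y" for y unfolding e_def d_def using cL by simp
  have injd: "inj d" using bd by (simp add: bij_betw_def)
  have pres: "g \<in> carrier G \<Longrightarrow> S \<subseteq> X \<Longrightarrow> \<mu> (\<phi> g ` S) = \<mu> S" for g S
    using assms(6) unfolding preserves_mean_def by blast
  have gX: "g \<in> carrier G \<Longrightarrow> x \<in> X \<Longrightarrow> \<phi> g x \<in> X" for g x
    using GA.element_image by blast
  have gi: "g \<in> carrier G \<Longrightarrow> x \<in> X \<Longrightarrow> \<phi> (inv\<^bsub>G\<^esub> g) (\<phi> g x) = x" for g x
    using GA.orbit_sym_aux by blast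
  have ig: "g \<in> carrier G \<Longrightarrow> x \<in> X \<Longrightarrow> \<phi> g (\<phi> (inv\<^bsub>G\<^esub> g) x) = x" for g x
    using gi[of "inv\<^bsub>G\<^esub> g" x] by simp
  have mapL: "g \<in> carrier G \<Longrightarrow> xs \<in> ?L \<Longrightarrow> map (\<phi> g) xs \<in> ?L" for g xs
    using gX by auto
  define \<psi> where "\<psi> g n = e (map (\<phi> g) (d n))" for g n
  define \<nu> where "\<nu> A = M.nu (d ` A)" for A
  have dpsi: "g \<in> carrier G \<Longrightarrow> d (\<psi> g n) = map (\<phi> g) (d n)" for g n
    unfolding \<psi>_def using de mapL dL by blast
  have psi_inv: "g \<in> carrier G \<Longrightarrow> \<psi> (inv\<^bsub>G\<^esub> g) (\<psi> g n) = n" for g n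
  proof -
    assume g: "g \<in> carrier G"
    have "map (\<phi> (inv\<^bsub>G\<^esub> g)) (map (\<phi> g) (d n)) = d n"
      using gi[OF g] dL[of n] by (auto simp: map_fix_iff in_listsD)
    then show ?thesis unfolding \<psi>_def using dpsi[OF g, of n] ed by (simp add: \<psi>_def)
  qed
  have psi_bij: "g \<in> carrier G \<Longrightarrow> \<psi> g \<in> Bij UNIV" for g
    unfolding Bij_def
  proof (intro IntI CollectI)
    assume g: "g \<in> carrier G"
    show "\<psi> g \<in> extensional UNIV" by (simp add: extensional_def)
    show "bij_betw (\<psi> g) UNIV UNIV"
    proof (rule bij_betw_byWitness[where f'="\<psi> (inv\<^bsub>G\<^esub> g)"])
      show "\<forall>a\<in>UNIV. \<psi> (inv\<^bsub>G\<^esub> g) (\<psi> g a) = a" using psi_inv[OF g] by simp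
      show "\<forall>a'\<in>UNIV. \<psi> g (\<psi> (inv\<^bsub>G\<^esub> g) a') = a'" using psi_inv[of "inv\<^bsub>G\<^esub> g"] g by simp
    qed auto
  qed
  have ga: "group_action G UNIV \<psi>"
    unfolding group_action_def group_hom_def group_hom_axioms_def
  proof (intro conjI)
    show "group G" by (rule grp.is_group)
    show "group (BijGroup UNIV)" by (rule group_BijGroup)
    show "\<psi> \<in> hom G (BijGroup UNIV)"
    proof (rule homI)
      fix g assume "g \<in> carrier G"
      then show "\<psi> g \<in> carrier (BijGroup UNIV)" using psi_bij by (simp add: BijGroup_def)
    next
      fix g h assume g: "g \<in> carrier G" and h: "h \<in> carrier G"
      have "\<psi> (g \<otimes>\<^bsub>G\<^esub> h) = (\<lambda>n. \<psi> g (\<psi> h n))"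
      proof
        fix n
        have eq: "map (\<phi> (g \<otimes>\<^bsub>G\<^esub> h)) (d n) = map (\<phi> g \<circ> \<phi> h) (d n)"
          using dL[of n] GA.composition_rule[OF _ g h] by (intro map_cong) (auto simp: in_listsD)
        show "\<psi> (g \<otimes>\<^bsub>G\<^esub> h) n = \<psi> g (\<psi> h n)"
          unfolding \<psi>_def de[OF mapL[OF h dL]] eq by simp
      qed
      then show "\<psi> (g \<otimes>\<^bsub>G\<^esub> h) = \<psi> g \<otimes>\<^bsub>BijGroup UNIV\<^esub> \<psi> h"
        using psi_bij[OF g] psi_bij[OF h] by (simp add: BijGroup_def compose_def restrict_def)
    qed
  qed
  have im: "is_mean UNIV \<nu>"
    unfolding is_mean_def
  proof (intro conjI allI impI)
    fix A :: "nat set"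
    have "d ` A \<subseteq> ?L" using dL by auto
    then show "0 \<le> \<nu> A" "\<nu> A \<le> 1" using M.nu_mean unfolding is_mean_def \<nu>_def by auto
  next
    have "d ` UNIV = ?L" using bd by (simp add: bij_betw_def)
    then show "\<nu> UNIV = 1" using M.nu_mean unfolding is_mean_def \<nu>_def by simp
  next
    fix A B :: "nat set" assume "A \<inter> B = {}"
    then have "d ` A \<inter> d ` B = {}" using injd by (simp add: image_Int[symmetric])
    moreover have "d ` A \<subseteq> ?L" "d ` B \<subseteq> ?L" using dL by auto
    ultimately show "\<nu> (A \<union> B) = \<nu> A + \<nu> B"
      using M.nu_mean unfolding is_mean_def \<nu>_def by (simp add: image_Un)
  qed
  have pm: "preserves_mean G UNIV \<psi> \<nu>"
    unfolding preserves_mean_def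
  proof (intro ballI allI impI)
    fix g and A :: "nat set" assume g: "g \<in> carrier G"
    have "d ` \<psi> g ` A = map (\<phi> g) ` d ` A"
      unfolding image_image using dpsi[OF g] by simp
    moreover have "M.nu (map (\<phi> g) ` d ` A) = M.nu (d ` A)"
    proof (rule M.nu_inv[where \<tau>="\<phi> (inv\<^bsub>G\<^esub> g)"])
      show "\<And>S. S \<subseteq> X \<Longrightarrow> \<mu> (\<phi> g ` S) = \<mu> S" using pres[OF g] .
      show "\<And>S. S \<subseteq> X \<Longrightarrow> \<mu> (\<phi> (inv\<^bsub>G\<^esub> g) ` S) = \<mu> S" using pres g by simp
      show "\<And>x. x \<in> X \<Longrightarrow> \<phi> g x \<in> X \<and> \<phi> (inv\<^bsub>G\<^esub> g) (\<phi> g x) = x" using gX gi g by blast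
      show "\<And>y. y \<in> X \<Longrightarrow> \<phi> (inv\<^bsub>G\<^esub> g) y \<in> X \<and> \<phi> g (\<phi> (inv\<^bsub>G\<^esub> g) y) = y"
        using gX ig g by simp
      show "d ` A \<subseteq> ?L" using dL by auto
    qed
    ultimately show "\<nu> (\<psi> g ` A) = \<nu> A" unfolding \<nu>_def by simp
  qed
  have fx: "\<nu> (fixset UNIV \<psi> g) = 0" if g: "g \<in> carrier G" and g1: "g \<noteq> \<one>\<^bsub>G\<^esub>" for g
  proof -
    have "d ` fixset UNIV \<psi> g = {xs \<in> ?L. map (\<phi> g) xs = xs}"
    proof
      show "d ` fixset UNIV \<psi> g \<subseteq> {xs \<in> ?L. map (\<phi> g) xs = xs}"
      proof
        fix xs assume "xs \<in> d ` fixset UNIV \<psi> g"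
        then obtain n where n: "xs = d n" "\<psi> g n = n" by (auto simp: fixset_def)
        then have "map (\<phi> g) (d n) = d n" using dpsi[OF g, of n] by simp
        then show "xs \<in> {xs \<in> ?L. map (\<phi> g) xs = xs}" using n dL by simp
      qed
      show "{xs \<in> ?L. map (\<phi> g) xs = xs} \<subseteq> d ` fixset UNIV \<psi> g"
      proof
        fix xs assume xs: "xs \<in> {xs \<in> ?L. map (\<phi> g) xs = xs}"
        then have "\<psi> g (e xs) = e xs" unfolding \<psi>_def using de by simp
        moreover have "xs = d (e xs)" using de xs by simp
        ultimately show "xs \<in> d ` fixset UNIV \<psi> g" unfolding fixset_def by blast
      qed
    qed
    moreover have "M.nu {xs \<in> ?L. map (\<phi> g) xs = xs} = 0"
    proof (rule M.nu_fix)
      show "\<And>x. x \<in> X \<Longrightarrow> \<phi> g x \<in> X" using gX g by blast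
      show "\<mu> {x \<in> X. \<phi> g x = x} < 1" using assms(7)[OF g g1] by (simp add: fixset_def)
    qed
    ultimately show ?thesis unfolding \<nu>_def by simp
  qed
  show ?thesis
    by (rule exI[of _ UNIV], rule exI[of _ \<psi>], rule exI[of _ \<nu>]) (use ga im pm fx in auto)
qed



end
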